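(* In the hexagonal three-direction setting with the random model described in the context, let $k\ge0$, let $R_b=\{r\in R: X_r=0\}$ be the set of rays with nonzero measurement, and let $C_b=\mathcal N(R_b)\setminus\mathcal N(R\setminus R_b)$ (equivalently, the set of cells none of whose three rays is a zero measurement). Then the expected number $N_C^0(k):=|C|-\mathbb{E}[|C_b|]$ of cells recognized as empty satisfies \[ N_C^0(k)=3N_C^1-3N_C^2+N_C^3, \] where \[ N_C^1=\sum_{r\in R_i}|r|\Big(1-\frac{|r|}{|C|}\Big)^k\quad\text{for any } i\in\{1,2,3\}, \] \[ N_C^2=\sum_{r_i\in R_i}\ \sum_{r_j\in R_j(r_i)}\Big(1-\frac{|r_i|+|r_j|-1}{|C|}\Big)^k\quad\text{for any } i\neq j\in\{1,2,3\}, \] \[ N_C^3=\sum_{c\in C}\Big(1-\frac{|r_1(c)|+|r_2(c)|+|r_3(c)|-2}{|C|}\Big)^k, \] and $R_j(r_i)$ denotes the set of rays in $R_j$ intersecting the ray $r_i$ (these quantities do not depend on the choice of $i$, resp. of $i\ne j$).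
   Context: Hexagonal setting. Let $d\ge 3$ be an odd integer. The set of cells is $C=\{(i_1,i_2)\in\mathbb{Z}^2 : |i_1|\le (d-1)/2,\ |i_2|\le (d-1)/2,\ |i_1+i_2|\le (d-1)/2\}$ (the cell centers are $i_1 d^1+i_2 d^2$ with $d^1=\tfrac12(\sqrt3,1)$, $d^2=(0,1)$, forming a hexagon), so $|C|=(3d^2+1)/4$. There are three directions of projection rays: $R_1$ consists of the $d$ rays $\{(i_1,i_2)\in C: i_1=a\}$, $R_2$ of the $d$ rays $\{(i_1,i_2)\in C: i_2=a\}$, and $R_3$ of the $d$ rays $\{(i_1,i_2)\in C: i_1+i_2=a\}$, for $a\in\{-(d-1)/2,\dots,(d-1)/2\}$; a ray is identified with the set of cells it meets, $|r|$ denotes its number of cells, and $R=R_1\cup R_2\cup R_3$, $|R|=3d$. Each cell $c$ lies on exactly one ray $r_i(c)\in R_i$ for each $i=1,2,3$. Random model: $k$ cells are drawn independently and uniformly from $C$ (with replacement; a cell may be drawn several times). For $r\in R$, $X_r\in\{0,1\}$ equals $1$ (a "zero measurement") iff none of the drawn cells lies on $r$. For a set $S$ of rays, $\mathcal N(S)$ is the set of cells lying on at least one ray of $S$. *)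

theory Defs
  imports "HOL-Probability.Probability"
begin

type_synonym cell = "int \<times> int"

definition hrad :: "nat \<Rightarrow> int" where
  "hrad d = (int d - 1) div 2"

definition hexC :: "nat \<Rightarrow> cell set" where
  "hexC d = {(i1, i2). \<bar>i1\<bar> \<le> hrad d \<and> \<bar>i2\<bar> \<le> hrad d \<and> \<bar>i1 + i2\<bar> \<le> hrad d}"

definition dircoord :: "nat \<Rightarrow> cell \<Rightarrow> int" where
  "dircoord i c = (if i = 1 then fst c else if i = 2 then snd c else fst c + snd c)"

text \<open>The ray of direction i with parameter a, identified with the set of cells it meets.\<close>
definition ray :: "nat \<Rightarrow> nat \<Rightarrow> int \<Rightarrow> cell set" where
  "ray d i a = {c \<in> hexC d. dircoord i c = a}"

definition raysDir :: "nat \<Rightarrow> nat \<Rightarrow> cell set set" where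
  "raysDir d i = {ray d i a | a. \<bar>a\<bar> \<le> hrad d}"

definition allRays :: "nat \<Rightarrow> cell set set" where
  "allRays d = raysDir d 1 \<union> raysDir d 2 \<union> raysDir d 3"

definition rayOf :: "nat \<Rightarrow> nat \<Rightarrow> cell \<Rightarrow> cell set" where
  "rayOf d i c = ray d i (dircoord i c)"

definition raysMeeting :: "nat \<Rightarrow> nat \<Rightarrow> cell set \<Rightarrow> cell set set" where
  "raysMeeting d j r = {r' \<in> raysDir d j. r' \<inter> r \<noteq> {}}"

definition nbhd :: "nat \<Rightarrow> cell set set \<Rightarrow> cell set" where
  "nbhd d S = {c \<in> hexC d. \<exists>r\<in>S. c \<in> r}"

text \<open>A draw of k cells is a function from {..<k} to cells. X_r = 1 (zero measurement)
  iff no drawn cell lies on r.\<close>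
definition zeroMeas :: "nat \<Rightarrow> (nat \<Rightarrow> cell) \<Rightarrow> cell set \<Rightarrow> bool" where
  "zeroMeas k draw r \<longleftrightarrow> (\<forall>t<k. draw t \<notin> r)"

definition Rb :: "nat \<Rightarrow> nat \<Rightarrow> (nat \<Rightarrow> cell) \<Rightarrow> cell set set" where
  "Rb d k draw = {r \<in> allRays d. \<not> zeroMeas k draw r}"

definition Cb :: "nat \<Rightarrow> nat \<Rightarrow> (nat \<Rightarrow> cell) \<Rightarrow> cell set" where
  "Cb d k draw = nbhd d (Rb d k draw) - nbhd d (allRays d - Rb d k draw)"

definition drawPmf :: "nat \<Rightarrow> nat \<Rightarrow> (nat \<Rightarrow> cell) pmf" where
  "drawPmf d k = Pi_pmf {..<k} undefined (\<lambda>_. pmf_of_set (hexC d))"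

definition NC0 :: "nat \<Rightarrow> nat \<Rightarrow> real" where
  "NC0 d k = real (card (hexC d))
     - measure_pmf.expectation (drawPmf d k) (\<lambda>draw. real (card (Cb d k draw)))"

definition NC1 :: "nat \<Rightarrow> nat \<Rightarrow> nat \<Rightarrow> real" where
  "NC1 d k i = (\<Sum>r\<in>raysDir d i. real (card r) * (1 - real (card r) / real (card (hexC d))) ^ k)"

definition NC2 :: "nat \<Rightarrow> nat \<Rightarrow> nat \<Rightarrow> nat \<Rightarrow> real" where
  "NC2 d k i j = (\<Sum>ri\<in>raysDir d i. \<Sum>rj\<in>raysMeeting d j ri.
      (1 - (real (card ri) + real (card rj) - 1) / real (card (hexC d))) ^ k)"

definition NC3 :: "nat \<Rightarrow> nat \<Rightarrow> real" where
  "NC3 d k = (\<Sum>c\<in>hexC d.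
      (1 - (real (card (rayOf d 1 c)) + real (card (rayOf d 2 c)) + real (card (rayOf d 3 c)) - 2)
            / real (card (hexC d))) ^ k)"

end

theory Submission
  imports Defs
begin


lemma mem_ray: "e \<in> ray d i a \<longleftrightarrow> e \<in> hexC d \<and> dircoord i e = a"
  by (simp add: ray_def)

lemma dc_bound: "c \<in> hexC d \<Longrightarrow> \<bar>dircoord i c\<bar> \<le> hrad d"
  by (cases c) (auto simp: hexC_def dircoord_def)

lemma dc_det:
  assumes "i \<in> {1,2,3}" "j \<in> {1,2,3::nat}" "i \<noteq> j"
    "dircoord i e = dircoord i c" "dircoord j e = dircoord j c"
  shows "e = c"
  using assms by (cases e; cases c) (auto simp: dircoord_def)

lemma finite_hexC: "finite (hexC d)"
proof -
  have "hexC d \<subseteq> {-hrad d..hrad d} \<times> {-hrad d..hrad d}"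
    by (auto simp: hexC_def)
  thus ?thesis by (rule finite_subset) auto
qed

lemma self_rayOf: "c \<in> hexC d \<Longrightarrow> c \<in> rayOf d i c"
  by (simp add: rayOf_def ray_def)

lemma rayOf_sub: "rayOf d i c \<subseteq> hexC d"
  by (auto simp: rayOf_def ray_def)

lemma rayOf_in: "c \<in> hexC d \<Longrightarrow> rayOf d i c \<in> raysDir d i"
  unfolding raysDir_def rayOf_def using dc_bound by blast

lemma rayOf_eq: "r \<in> raysDir d i \<Longrightarrow> c \<in> r \<Longrightarrow> rayOf d i c = r"
  by (auto simp: raysDir_def rayOf_def ray_def)

lemma raysDir_eq: "raysDir d i = (\<lambda>a. ray d i a) ` {-hrad d..hrad d}"
proof
  show "raysDir d i \<subseteq> (\<lambda>a. ray d i a) ` {-hrad d..hrad d}"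
  proof
    fix r assume "r \<in> raysDir d i"
    then obtain a where "r = ray d i a" "\<bar>a\<bar> \<le> hrad d" unfolding raysDir_def by blast
    moreover have "a \<in> {-hrad d..hrad d}" using \<open>\<bar>a\<bar> \<le> hrad d\<close> by (simp add: abs_le_iff)
    ultimately show "r \<in> (\<lambda>a. ray d i a) ` {-hrad d..hrad d}" by blast
  qed
  show "(\<lambda>a. ray d i a) ` {-hrad d..hrad d} \<subseteq> raysDir d i"
  proof
    fix r assume "r \<in> (\<lambda>a. ray d i a) ` {-hrad d..hrad d}"
    then obtain a where "r = ray d i a" "a \<in> {-hrad d..hrad d}" by blast
    moreover have "\<bar>a\<bar> \<le> hrad d" using \<open>a \<in> {-hrad d..hrad d}\<close> by (simp add: abs_le_iff)
    ultimately show "r \<in> raysDir d i" unfolding raysDir_def by blast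
  qed
qed

lemma finite_raysDir: "finite (raysDir d i)"
  by (simp add: raysDir_eq)

lemma Union_raysDir: "\<Union> (raysDir d i) = hexC d"
proof
  show "\<Union> (raysDir d i) \<subseteq> hexC d" by (auto simp: raysDir_def ray_def)
  show "hexC d \<subseteq> \<Union> (raysDir d i)" using rayOf_in self_rayOf by blast
qed

lemma sum_over_rays:
  "(\<Sum>c\<in>hexC d. g (rayOf d i c) c) = (\<Sum>r\<in>raysDir d i. \<Sum>c\<in>r. g r c)"
proof -
  have "(\<Sum>c\<in>hexC d. g (rayOf d i c) c) = (\<Sum>c\<in>\<Union> (raysDir d i). g (rayOf d i c) c)"
    by (simp add: Union_raysDir)
  also have "\<dots> = (\<Sum>r\<in>raysDir d i. \<Sum>c\<in>r. g (rayOf d i c) c)"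
  proof (subst sum.Union_disjoint)
    show "\<forall>A\<in>raysDir d i. finite A"
      using finite_hexC by (auto simp: raysDir_def ray_def)
    show "\<forall>A\<in>raysDir d i. \<forall>B\<in>raysDir d i. A \<noteq> B \<longrightarrow> A \<inter> B = {}"
      by (auto simp: raysDir_def ray_def)
  qed simp
  also have "\<dots> = (\<Sum>r\<in>raysDir d i. \<Sum>c\<in>r. g r c)"
    by (intro sum.cong refl) (simp add: rayOf_eq)
  finally show ?thesis .
qed

definition F :: "nat \<Rightarrow> nat \<Rightarrow> cell \<Rightarrow> real" where
  "F d i c = real (card (rayOf d i c))"

lemma NC1_cells: "NC1 d k i = (\<Sum>c\<in>hexC d. (1 - F d i c / real (card (hexC d))) ^ k)"
  unfolding NC1_def F_def
  by (subst sum_over_rays[where g = "\<lambda>r c. (1 - real (card r) / real (card (hexC d))) ^ k"]) simp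

lemma NC2_cells:
  assumes "i \<in> {1,2,3}" "j \<in> {1,2,3::nat}" "i \<noteq> j"
  shows "NC2 d k i j = (\<Sum>c\<in>hexC d. (1 - (F d i c + F d j c - 1) / real (card (hexC d))) ^ k)"
proof -
  let ?h = "\<lambda>ri rj. (1 - (real (card ri) + real (card rj) - 1) / real (card (hexC d))) ^ k"
  have "(\<Sum>c\<in>hexC d. (1 - (F d i c + F d j c - 1) / real (card (hexC d))) ^ k)
      = (\<Sum>ri\<in>raysDir d i. \<Sum>c\<in>ri. ?h ri (rayOf d j c))"
    unfolding F_def by (subst sum_over_rays[where g = "\<lambda>r c. ?h r (rayOf d j c)"]) simp
  also have "\<dots> = (\<Sum>ri\<in>raysDir d i. \<Sum>rj\<in>raysMeeting d j ri. ?h ri rj)"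
  proof (intro sum.cong refl)
    fix ri assume ri: "ri \<in> raysDir d i"
    have sub: "ri \<subseteq> hexC d" using ri by (auto simp: raysDir_def ray_def)
    have inj: "inj_on (rayOf d j) ri"
    proof
      fix x y assume x: "x \<in> ri" and y: "y \<in> ri" and e: "rayOf d j x = rayOf d j y"
      have "x \<in> rayOf d j y" using e self_rayOf[of x d j] x sub by auto
      hence 1: "dircoord j x = dircoord j y" by (simp add: rayOf_def ray_def)
      have 2: "dircoord i x = dircoord i y" using ri x y by (auto simp: raysDir_def ray_def)
      show "x = y" using dc_det[OF assms 2 1] .
    qed
    have img: "rayOf d j ` ri = raysMeeting d j ri"
    proof
      show "rayOf d j ` ri \<subseteq> raysMeeting d j ri"
        using sub self_rayOf rayOf_in unfolding raysMeeting_def by blast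
      show "raysMeeting d j ri \<subseteq> rayOf d j ` ri"
      proof
        fix rj assume "rj \<in> raysMeeting d j ri"
        then obtain e where "rj \<in> raysDir d j" "e \<in> rj" "e \<in> ri"
          unfolding raysMeeting_def by blast
        hence "rj = rayOf d j e" using rayOf_eq[of rj d j e] by simp
        thus "rj \<in> rayOf d j ` ri" using \<open>e \<in> ri\<close> by blast
      qed
    qed
    show "(\<Sum>c\<in>ri. ?h ri (rayOf d j c)) = (\<Sum>rj\<in>raysMeeting d j ri. ?h ri rj)"
      using sum.reindex[OF inj, of "?h ri"] img by simp
  qed
  finally show ?thesis unfolding NC2_def by simp
qed



definition Z :: "nat \<Rightarrow> cell set \<Rightarrow> (nat \<Rightarrow> cell) \<Rightarrow> real" where
  "Z k S draw = (if \<forall>t<k. draw t \<notin> S then 1 else 0)"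

lemma hexC_ne: "d \<ge> 1 \<Longrightarrow> hexC d \<noteq> {}"
proof -
  assume "d \<ge> 1"
  hence "(0,0) \<in> hexC d" by (auto simp: hexC_def hrad_def)
  thus ?thesis by blast
qed

lemma finite_set_draw: "d \<ge> 1 \<Longrightarrow> finite (set_pmf (drawPmf d k))"
proof -
  assume that: "d \<ge> 1"
  have "set_pmf (drawPmf d k) \<subseteq> PiE_dflt {..<k} undefined (set_pmf \<circ> (\<lambda>_. pmf_of_set (hexC d)))"
    unfolding drawPmf_def by (rule set_Pi_pmf_subset') simp
  moreover have "finite (PiE_dflt {..<k} undefined (set_pmf \<circ> (\<lambda>_. pmf_of_set (hexC d))))"
    using finite_hexC hexC_ne that by (intro finite_PiE_dflt) auto
  ultimately show ?thesis by (rule finite_subset)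
qed

lemma integrable_draw: "d \<ge> 1 \<Longrightarrow> integrable (measure_pmf (drawPmf d k)) (f :: _ \<Rightarrow> real)"
  by (rule integrable_measure_pmf_finite[OF finite_set_draw])

lemma EZ:
  assumes "S \<subseteq> hexC d" and d1: "d \<ge> 1"
  shows "measure_pmf.expectation (drawPmf d k) (Z k S) = (1 - real (card S) / real (card (hexC d))) ^ k"
proof -
  have "Z k S = indicator (Pi {..<k} (\<lambda>_. - S))"
    by (auto simp: Z_def fun_eq_iff indicator_def)
  hence "measure_pmf.expectation (drawPmf d k) (Z k S)
      = measure_pmf.prob (drawPmf d k) (Pi {..<k} (\<lambda>_. - S))" by simp
  also have "\<dots> = (\<Prod>t\<in>{..<k}. measure_pmf.prob (pmf_of_set (hexC d)) (- S))"
    unfolding drawPmf_def by (rule measure_Pi_pmf_Pi) simp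
  also have "measure_pmf.prob (pmf_of_set (hexC d)) (- S) = real (card (hexC d \<inter> - S)) / real (card (hexC d))"
    by (rule measure_pmf_of_set[OF hexC_ne[OF d1] finite_hexC])
  also have "hexC d \<inter> - S = hexC d - S" by blast
  also have "real (card (hexC d - S)) = real (card (hexC d)) - real (card S)"
    using assms finite_hexC by (simp add: card_Diff_subset finite_subset card_mono of_nat_diff)
  also have "(real (card (hexC d)) - real (card S)) / real (card (hexC d)) = 1 - real (card S) / real (card (hexC d))"
    using hexC_ne[OF d1] finite_hexC by (simp add: diff_divide_distrib card_gt_0_iff)
  finally show ?thesis by simp
qed



lemma rays_through:
  assumes c: "c \<in> hexC d"
  shows "(r \<in> allRays d \<and> c \<in> r) \<longleftrightarrow> (r = rayOf d 1 c \<or> r = rayOf d 2 c \<or> r = rayOf d 3 c)"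
proof
  assume "r \<in> allRays d \<and> c \<in> r"
  thus "r = rayOf d 1 c \<or> r = rayOf d 2 c \<or> r = rayOf d 3 c"
    unfolding allRays_def using rayOf_eq by blast
next
  assume "r = rayOf d 1 c \<or> r = rayOf d 2 c \<or> r = rayOf d 3 c"
  thus "r \<in> allRays d \<and> c \<in> r"
    unfolding allRays_def using rayOf_in[OF c] self_rayOf[OF c] by blast
qed

lemma Cb_iff:
  assumes c: "c \<in> hexC d"
  shows "c \<in> Cb d k draw \<longleftrightarrow> \<not> zeroMeas k draw (rayOf d 1 c) \<and>
     \<not> zeroMeas k draw (rayOf d 2 c) \<and> \<not> zeroMeas k draw (rayOf d 3 c)"
proof -
  have "c \<in> Cb d k draw \<longleftrightarrow> (\<exists>r. (r \<in> allRays d \<and> c \<in> r) \<and> \<not> zeroMeas k draw r) \<and>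
         \<not> (\<exists>r. (r \<in> allRays d \<and> c \<in> r) \<and> zeroMeas k draw r)"
    unfolding Cb_def nbhd_def Rb_def using c by blast
  also have "\<dots> \<longleftrightarrow> \<not> zeroMeas k draw (rayOf d 1 c) \<and>
     \<not> zeroMeas k draw (rayOf d 2 c) \<and> \<not> zeroMeas k draw (rayOf d 3 c)"
    unfolding rays_through[OF c] by blast
  finally show ?thesis .
qed

lemma Cb_sub: "Cb d k draw \<subseteq> hexC d"
  by (auto simp: Cb_def nbhd_def)

lemma inter2:
  assumes c: "c \<in> hexC d" and "i \<in> {1,2,3}" "j \<in> {1,2,3::nat}" "i \<noteq> j"
  shows "rayOf d i c \<inter> rayOf d j c = {c}"
proof
  show "rayOf d i c \<inter> rayOf d j c \<subseteq> {c}"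
  proof
    fix e assume "e \<in> rayOf d i c \<inter> rayOf d j c"
    hence "dircoord i e = dircoord i c" "dircoord j e = dircoord j c"
      by (auto simp: rayOf_def ray_def)
    thus "e \<in> {c}" using dc_det[OF assms(2-4)] by simp
  qed
  show "{c} \<subseteq> rayOf d i c \<inter> rayOf d j c" using self_rayOf[OF c] by blast
qed

lemma finite_rayOf: "finite (rayOf d i c)"
  using rayOf_sub finite_hexC by (rule finite_subset)

lemma card2:
  assumes c: "c \<in> hexC d" and "i \<in> {1,2,3}" "j \<in> {1,2,3::nat}" "i \<noteq> j"
  shows "real (card (rayOf d i c \<union> rayOf d j c)) = F d i c + F d j c - 1"
proof -
  have "card (rayOf d i c) + card (rayOf d j c) = card (rayOf d i c \<union> rayOf d j c) + card (rayOf d i c \<inter> rayOf d j c)"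
    by (rule card_Un_Int) (rule finite_rayOf)+
  thus ?thesis unfolding F_def inter2[OF assms] by simp
qed

lemma card3:
  assumes c: "c \<in> hexC d"
  shows "real (card (rayOf d 1 c \<union> rayOf d 2 c \<union> rayOf d 3 c)) = F d 1 c + F d 2 c + F d 3 c - 2"
proof -
  have e: "(rayOf d 1 c \<union> rayOf d 2 c) \<inter> rayOf d 3 c = {c}"
    using inter2[OF c, of 1 3] inter2[OF c, of 2 3] by auto
  have "card (rayOf d 1 c \<union> rayOf d 2 c) + card (rayOf d 3 c) = card (rayOf d 1 c \<union> rayOf d 2 c \<union> rayOf d 3 c) + card ((rayOf d 1 c \<union> rayOf d 2 c) \<inter> rayOf d 3 c)"
    by (rule card_Un_Int) (simp_all add: finite_rayOf)
  hence "card (rayOf d 1 c \<union> rayOf d 2 c) + card (rayOf d 3 c) = card (rayOf d 1 c \<union> rayOf d 2 c \<union> rayOf d 3 c) + 1"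
    unfolding e by simp
  hence "real (card (rayOf d 1 c \<union> rayOf d 2 c) + card (rayOf d 3 c)) = real (card (rayOf d 1 c \<union> rayOf d 2 c \<union> rayOf d 3 c) + 1)"
    by (rule arg_cong)
  hence "real (card (rayOf d 1 c \<union> rayOf d 2 c)) + F d 3 c = real (card (rayOf d 1 c \<union> rayOf d 2 c \<union> rayOf d 3 c)) + 1"
    unfolding F_def by simp
  thus ?thesis using card2[OF c, of 1 2] by simp
qed

definition W :: "nat \<Rightarrow> nat \<Rightarrow> cell \<Rightarrow> (nat \<Rightarrow> cell) \<Rightarrow> real" where
  "W d k c draw = (if c \<in> Cb d k draw then 0 else 1)"

lemma W_eq:
  assumes c: "c \<in> hexC d"
  shows "W d k c = (\<lambda>draw. Z k (rayOf d 1 c) draw + Z k (rayOf d 2 c) draw + Z k (rayOf d 3 c) draw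
     - Z k (rayOf d 1 c \<union> rayOf d 2 c) draw - Z k (rayOf d 1 c \<union> rayOf d 3 c) draw
     - Z k (rayOf d 2 c \<union> rayOf d 3 c) draw + Z k (rayOf d 1 c \<union> rayOf d 2 c \<union> rayOf d 3 c) draw)"
proof
  fix draw :: "nat \<Rightarrow> cell"
  have u: "\<And>A B. (\<forall>t<k. draw t \<notin> A \<union> B) = ((\<forall>t<k. draw t \<notin> A) \<and> (\<forall>t<k. draw t \<notin> B))" by blast
  show "W d k c draw = Z k (rayOf d 1 c) draw + Z k (rayOf d 2 c) draw + Z k (rayOf d 3 c) draw
     - Z k (rayOf d 1 c \<union> rayOf d 2 c) draw - Z k (rayOf d 1 c \<union> rayOf d 3 c) draw
     - Z k (rayOf d 2 c \<union> rayOf d 3 c) draw + Z k (rayOf d 1 c \<union> rayOf d 2 c \<union> rayOf d 3 c) draw"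
    unfolding W_def Cb_iff[OF c] Z_def zeroMeas_def u
    by (cases "\<forall>t<k. draw t \<notin> rayOf d 1 c"; cases "\<forall>t<k. draw t \<notin> rayOf d 2 c";
        cases "\<forall>t<k. draw t \<notin> rayOf d 3 c") simp_all
qed

lemma lin7:
  fixes a b c e f g h :: "_ \<Rightarrow> real"
  assumes "integrable M a" "integrable M b" "integrable M c" "integrable M e"
    "integrable M f" "integrable M g" "integrable M h"
  shows "integral\<^sup>L M (\<lambda>x. a x + b x + c x - e x - f x - g x + h x) =
    integral\<^sup>L M a + integral\<^sup>L M b + integral\<^sup>L M c - integral\<^sup>L M e
    - integral\<^sup>L M f - integral\<^sup>L M g + integral\<^sup>L M h"
  using assms by simp

lemma EW:
  assumes c: "c \<in> hexC d" and d1: "d \<ge> 1"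
  shows "measure_pmf.expectation (drawPmf d k) (W d k c) =
     (1 - F d 1 c / real (card (hexC d))) ^ k + (1 - F d 2 c / real (card (hexC d))) ^ k + (1 - F d 3 c / real (card (hexC d))) ^ k
     - (1 - (F d 1 c + F d 2 c - 1) / real (card (hexC d))) ^ k - (1 - (F d 1 c + F d 3 c - 1) / real (card (hexC d))) ^ k
     - (1 - (F d 2 c + F d 3 c - 1) / real (card (hexC d))) ^ k + (1 - (F d 1 c + F d 2 c + F d 3 c - 2) / real (card (hexC d))) ^ k"
proof -
  have s: "\<And>i. rayOf d i c \<subseteq> hexC d" by (rule rayOf_sub)
  have s2: "\<And>i j. rayOf d i c \<union> rayOf d j c \<subseteq> hexC d" using s by blast
  have s3: "rayOf d 1 c \<union> rayOf d 2 c \<union> rayOf d 3 c \<subseteq> hexC d" using s by blast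
  have c12: "real (card (rayOf d 1 c \<union> rayOf d 2 c)) = F d 1 c + F d 2 c - 1" by (rule card2[OF c]) auto
  have c13: "real (card (rayOf d 1 c \<union> rayOf d 3 c)) = F d 1 c + F d 3 c - 1" by (rule card2[OF c]) auto
  have c23: "real (card (rayOf d 2 c \<union> rayOf d 3 c)) = F d 2 c + F d 3 c - 1" by (rule card2[OF c]) auto
  show ?thesis
    unfolding W_eq[OF c]
    apply (subst lin7)
    apply (rule integrable_draw[OF d1])+
    unfolding EZ[OF s d1] EZ[OF s2 d1] EZ[OF s3 d1] c12 c13 c23 card3[OF c]
    by (simp add: F_def)
qed



lemma sym_F:
  assumes inv: "\<And>c. \<phi> (\<phi> c) = c" and pres: "\<And>c. c \<in> hexC d \<Longrightarrow> \<phi> c \<in> hexC d"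
    and dc: "\<And>e. dircoord i (\<phi> e) = s * dircoord i' e" and s: "s \<noteq> 0"
    and c: "c \<in> hexC d"
  shows "F d i (\<phi> c) = F d i' c"
proof -
  have "rayOf d i (\<phi> c) = \<phi> ` rayOf d i' c"
  proof
    show "\<phi> ` rayOf d i' c \<subseteq> rayOf d i (\<phi> c)"
    proof
      fix x assume "x \<in> \<phi> ` rayOf d i' c"
      then obtain e where x: "x = \<phi> e" and e: "e \<in> hexC d" "dircoord i' e = dircoord i' c"
        by (auto simp: rayOf_def ray_def)
      have "dircoord i x = dircoord i (\<phi> c)" unfolding x dc e(2) ..
      thus "x \<in> rayOf d i (\<phi> c)" using pres[OF e(1)] x by (simp add: rayOf_def ray_def)
    qed
    show "rayOf d i (\<phi> c) \<subseteq> \<phi> ` rayOf d i' c"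
    proof
      fix e' assume e': "e' \<in> rayOf d i (\<phi> c)"
      obtain e where ee: "e' = \<phi> e" and e_def: "e = \<phi> e'" using inv by metis
      have h: "e' \<in> hexC d" "dircoord i e' = dircoord i (\<phi> c)" using e' by (auto simp: rayOf_def ray_def)
      have "e \<in> hexC d" using pres[OF h(1)] e_def by simp
      moreover have "s * dircoord i' e = s * dircoord i' c"
        using h(2) unfolding ee dc .
      ultimately have "e \<in> hexC d" "s * dircoord i' e = s * dircoord i' c" by auto
      hence "e \<in> rayOf d i' c" using s by (simp add: rayOf_def ray_def)
      thus "e' \<in> \<phi> ` rayOf d i' c" using ee by blast
    qed
  qed
  moreover have "inj_on \<phi> (rayOf d i' c)" by (rule inj_on_inverseI[where g = \<phi>]) (rule inv)
  ultimately show ?thesis unfolding F_def by (simp add: card_image)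
qed

lemma sum_inv:
  assumes inv: "\<And>c. \<phi> (\<phi> c) = c" and pres: "\<And>c. c \<in> hexC d \<Longrightarrow> \<phi> c \<in> hexC d"
  shows "(\<Sum>c\<in>hexC d. g (\<phi> c)) = (\<Sum>c\<in>hexC d. g c)"
proof -
  have img: "\<phi> ` hexC d = hexC d"
  proof
    show "\<phi> ` hexC d \<subseteq> hexC d" using pres by blast
    show "hexC d \<subseteq> \<phi> ` hexC d"
    proof
      fix c assume "c \<in> hexC d"
      hence "\<phi> c \<in> hexC d" "c = \<phi> (\<phi> c)" using pres inv by auto
      thus "c \<in> \<phi> ` hexC d" by blast
    qed
  qed
  have "inj_on \<phi> (hexC d)" by (rule inj_on_inverseI[where g = \<phi>]) (rule inv)
  hence "(\<Sum>c\<in>\<phi> ` hexC d. g c) = (\<Sum>c\<in>hexC d. g (\<phi> c))" by (simp add: sum.reindex)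
  thus ?thesis using img by simp
qed

definition sw :: "cell \<Rightarrow> cell" where "sw = (\<lambda>(x, y). (y, x))"
definition ta :: "cell \<Rightarrow> cell" where "ta = (\<lambda>(x, y). (-(x+y), y))"
definition rh :: "cell \<Rightarrow> cell" where "rh = (\<lambda>(x, y). (x, -(x+y)))"

lemma sw_inv: "sw (sw c) = c" by (cases c) (simp add: sw_def)
lemma ta_inv: "ta (ta c) = c" by (cases c) (simp add: ta_def)
lemma rh_inv: "rh (rh c) = c" by (cases c) (simp add: rh_def)
lemma sw_pres: "c \<in> hexC d \<Longrightarrow> sw c \<in> hexC d" by (cases c) (auto simp: sw_def hexC_def add.commute)
lemma ta_pres: "c \<in> hexC d \<Longrightarrow> ta c \<in> hexC d" by (cases c) (auto simp: ta_def hexC_def)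
lemma rh_pres: "c \<in> hexC d \<Longrightarrow> rh c \<in> hexC d" by (cases c) (auto simp: rh_def hexC_def)

lemma F_sw: "c \<in> hexC d \<Longrightarrow> F d 1 (sw c) = F d 2 c"
  by (rule sym_F[where s=1, OF sw_inv sw_pres]) (auto simp: sw_def dircoord_def split: prod.splits)
lemma F_ta1: "c \<in> hexC d \<Longrightarrow> F d 1 (ta c) = F d 3 c"
  by (rule sym_F[where s="-1", OF ta_inv ta_pres]) (auto simp: ta_def dircoord_def split: prod.splits)
lemma F_ta2: "c \<in> hexC d \<Longrightarrow> F d 2 (ta c) = F d 2 c"
  by (rule sym_F[where s=1, OF ta_inv ta_pres]) (auto simp: ta_def dircoord_def split: prod.splits)
lemma F_rh1: "c \<in> hexC d \<Longrightarrow> F d 1 (rh c) = F d 1 c"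
  by (rule sym_F[where s=1, OF rh_inv rh_pres]) (auto simp: rh_def dircoord_def split: prod.splits)
lemma F_rh2: "c \<in> hexC d \<Longrightarrow> F d 2 (rh c) = F d 3 c"
  by (rule sym_F[where s="-1", OF rh_inv rh_pres]) (auto simp: rh_def dircoord_def split: prod.splits)

lemmas F_simps = F_sw F_ta1 F_ta2 F_rh1 F_rh2 F_sw[simplified] F_ta1[simplified] F_ta2[simplified] F_rh1[simplified] F_rh2[simplified]

lemma sum_cong_F:
  assumes "\<And>c. c \<in> hexC d \<Longrightarrow> a c = b c"
  shows "(\<Sum>c\<in>hexC d. h (a c)) = (\<Sum>c\<in>hexC d. h (b c))"
  using assms by (intro sum.cong) auto

lemma NC1_sym:
  shows "NC1 d k 2 = NC1 d k 1" and "NC1 d k 3 = NC1 d k 1"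
proof -
  let ?h = "\<lambda>x. (1 - x / real (card (hexC d))) ^ k"
  have "NC1 d k 2 = (\<Sum>c\<in>hexC d. ?h (F d 1 (sw c)))"
    unfolding NC1_cells by (rule sum_cong_F) (simp add: F_simps)
  also have "\<dots> = NC1 d k 1" unfolding NC1_cells by (rule sum_inv[OF sw_inv sw_pres])
  finally show "NC1 d k 2 = NC1 d k 1" .
  have "NC1 d k 3 = (\<Sum>c\<in>hexC d. ?h (F d 1 (ta c)))"
    unfolding NC1_cells by (rule sum_cong_F) (simp add: F_simps)
  also have "\<dots> = NC1 d k 1" unfolding NC1_cells by (rule sum_inv[OF ta_inv ta_pres])
  finally show "NC1 d k 3 = NC1 d k 1" .
qed

lemma NC2_sym:
  shows "NC2 d k 1 3 = NC2 d k 1 2" and "NC2 d k 2 3 = NC2 d k 1 2"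
    and "NC2 d k 2 1 = NC2 d k 1 2" and "NC2 d k 3 1 = NC2 d k 1 2" and "NC2 d k 3 2 = NC2 d k 1 2"
proof -
  let ?h = "\<lambda>x. (1 - (x - 1) / real (card (hexC d))) ^ k"
  have e: "NC2 d k i j = (\<Sum>c\<in>hexC d. ?h (F d i c + F d j c))"
    if "i \<in> {1,2,3}" "j \<in> {1,2,3}" "i \<noteq> j" for i j
    using NC2_cells[OF that] by simp
  have A: "NC2 d k 1 3 = NC2 d k 1 2"
  proof -
    have "NC2 d k 1 3 = (\<Sum>c\<in>hexC d. ?h (F d 1 (rh c) + F d 2 (rh c)))"
      by (subst e) (auto intro!: sum_cong_F simp: F_simps)
    also have "\<dots> = NC2 d k 1 2" by (subst e) (auto intro: sum_inv[OF rh_inv rh_pres])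
    finally show ?thesis .
  qed
  have B: "NC2 d k 3 2 = NC2 d k 1 2"
  proof -
    have "NC2 d k 3 2 = (\<Sum>c\<in>hexC d. ?h (F d 1 (ta c) + F d 2 (ta c)))"
      by (subst e) (auto intro!: sum_cong_F simp: F_simps)
    also have "\<dots> = NC2 d k 1 2" by (subst e) (auto intro: sum_inv[OF ta_inv ta_pres])
    finally show ?thesis .
  qed
  have C: "NC2 d k j i = NC2 d k i j" if "i \<in> {1,2,3}" "j \<in> {1,2,3}" "i \<noteq> j" for i j
    using e[OF that] e[of j i] that by (simp add: add.commute)
  show "NC2 d k 1 3 = NC2 d k 1 2" by (rule A)
  show "NC2 d k 3 2 = NC2 d k 1 2" by (rule B)
  show "NC2 d k 2 3 = NC2 d k 1 2" using B C[of 2 3] by simp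
  show "NC2 d k 2 1 = NC2 d k 1 2" using C[of 1 2] by simp
  show "NC2 d k 3 1 = NC2 d k 1 2" using A C[of 1 3] by simp
qed



lemma card_Cb_sum:
  "real (card (Cb d k draw)) = real (card (hexC d)) - (\<Sum>c\<in>hexC d. W d k c draw)"
proof -
  have "(\<Sum>c\<in>hexC d. W d k c draw) = (\<Sum>c\<in>hexC d - Cb d k draw. 1)"
    unfolding W_def by (rule sum.mono_neutral_cong_right) (auto simp: finite_hexC)
  also have "\<dots> = real (card (hexC d) - card (Cb d k draw))"
    using Cb_sub finite_hexC by (simp add: card_Diff_subset finite_subset[OF Cb_sub finite_hexC])
  also have "\<dots> = real (card (hexC d)) - real (card (Cb d k draw))"
    using Cb_sub finite_hexC by (simp add: card_mono of_nat_diff)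
  finally show ?thesis by simp
qed

lemma NC0_sum:
  assumes d1: "d \<ge> 1"
  shows "NC0 d k = (\<Sum>c\<in>hexC d. measure_pmf.expectation (drawPmf d k) (W d k c))"
proof -
  have "measure_pmf.expectation (drawPmf d k) (\<lambda>draw. real (card (Cb d k draw)))
     = measure_pmf.expectation (drawPmf d k) (\<lambda>draw. real (card (hexC d)) - (\<Sum>c\<in>hexC d. W d k c draw))"
    by (simp add: card_Cb_sum)
  also have "\<dots> = real (card (hexC d)) - measure_pmf.expectation (drawPmf d k) (\<lambda>draw. \<Sum>c\<in>hexC d. W d k c draw)"
    by (subst Bochner_Integration.integral_diff) (simp_all add: integrable_draw[OF d1])
  also have "measure_pmf.expectation (drawPmf d k) (\<lambda>draw. \<Sum>c\<in>hexC d. W d k c draw)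
     = (\<Sum>c\<in>hexC d. measure_pmf.expectation (drawPmf d k) (W d k c))"
    by (rule Bochner_Integration.integral_sum) (rule integrable_draw[OF d1])
  finally show ?thesis unfolding NC0_def by simp
qed

lemma sum_lin7:
  fixes a b c e f g h :: "_ \<Rightarrow> real"
  shows "(\<Sum>x\<in>A. a x + b x + c x - e x - f x - g x + h x) =
    sum a A + sum b A + sum c A - sum e A - sum f A - sum g A + sum h A"
  by (simp add: sum.distrib sum_subtractf)

lemma NC0_decomp:
  assumes d1: "d \<ge> 1"
  shows "NC0 d k = NC1 d k 1 + NC1 d k 2 + NC1 d k 3 - NC2 d k 1 2 - NC2 d k 1 3 - NC2 d k 2 3 + NC3 d k"
proof -
  have "NC0 d k = (\<Sum>c\<in>hexC d.
     (1 - F d 1 c / real (card (hexC d))) ^ k + (1 - F d 2 c / real (card (hexC d))) ^ k + (1 - F d 3 c / real (card (hexC d))) ^ k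
     - (1 - (F d 1 c + F d 2 c - 1) / real (card (hexC d))) ^ k - (1 - (F d 1 c + F d 3 c - 1) / real (card (hexC d))) ^ k
     - (1 - (F d 2 c + F d 3 c - 1) / real (card (hexC d))) ^ k + (1 - (F d 1 c + F d 2 c + F d 3 c - 2) / real (card (hexC d))) ^ k)"
    unfolding NC0_sum[OF d1] by (rule sum.cong[OF refl]) (rule EW, assumption, rule d1)
  also have "\<dots> = NC1 d k 1 + NC1 d k 2 + NC1 d k 3 - NC2 d k 1 2 - NC2 d k 1 3 - NC2 d k 2 3 + NC3 d k"
    unfolding sum_lin7 NC1_cells
    by (subst (1 2 3) NC2_cells) (simp_all add: NC3_def F_def)
  finally show ?thesis .
qed

theorem proposition3p2:
  fixes d k :: nat
  assumes "odd d" and "d \<ge> 3"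
  shows "\<forall>i\<in>{1,2,3}. \<forall>j\<in>{1,2,3}. i \<noteq> j \<longrightarrow>
           NC0 d k = 3 * NC1 d k i - 3 * NC2 d k i j + NC3 d k"
proof -
  have d1: "d \<ge> 1" using assms by simp
  have e: "NC0 d k = 3 * NC1 d k 1 - 3 * NC2 d k 1 2 + NC3 d k"
    using NC0_decomp[OF d1] NC1_sym[of d k] NC2_sym[of d k] by simp
  show ?thesis
    using e NC1_sym[of d k] NC2_sym[of d k] by auto
qed

end
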